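(* For any $1\le q\le\mathsf n-1$, \[\big|\log\mathbb P_{\pi_V}(X_q\mid X_{q+1:\mathsf n})\big|\le\log(\nu_q^{-1}),\] and for all $\ell\ge1$ and $1\le q\le\mathsf n-1$, \[\big|\log\mathbb P_{\pi_V}(X_q\mid X_{q+1:\mathsf n})-\log\mathbb P_{\pi_V}(X_q\mid X_{q+1:\mathsf n+\ell})\big|\le\nu_q^{-1}\prod_{k=q+1}^{\mathsf n-1}(1-\nu_k),\] with the convention that an empty product equals $1$. These bounds hold for every realization of the observations.
   Context: $\pi_V$ is a probability distribution on a measurable space $\mathbb V$, $\mathbb X$ a discrete set, and $K_i:\mathbb X\times\mathbb V^2\to[0,\infty)$ ($i\ge1$) are such that each $K_i(\cdot,v,w)$ is a probability on $\mathbb X$. For any length $m\ge1$, $\mathbb P_{\pi_V}$ denotes the law of $(V_{1:m+1},X_{1:m})$ where $V_i$ are i.i.d. $\pi_V$ and, given $V$, the $X_i$ are independent with $\mathbb P(X_i=x\mid V)=K_i(x,V_i,V_{i+1})$ (these laws are consistent in $m$); $\mathbb P_{\pi_V}(X_q\mid X_{q+1:m})$ is the conditional probability of the observed value of $X_q$ given the observed $X_{q+1:m}$. Assumption H2: there exist $\nu_i>0$ with $\nu_i\le K_i(x,v,w)\le1$ for all $x,i,v,w$. *)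

theory Defs
  imports "HOL-Probability.Probability"
begin

text \<open>Probability, under the law P_piV of the model of length m (V_1..V_{m+1} i.i.d. piV,
  X_i conditionally independent given V with P(X_i = x | V) = K i x V_i V_{i+1}),
  of the event that X_i = x i for all i in the index set A (a subset of 1..m).\<close>
definition obs_prob ::
  "'v measure \<Rightarrow> (nat \<Rightarrow> 'x \<Rightarrow> 'v \<Rightarrow> 'v \<Rightarrow> real) \<Rightarrow> nat \<Rightarrow> nat set \<Rightarrow> (nat \<Rightarrow> 'x) \<Rightarrow> real"
  where
  "obs_prob piV K m A x =
     (\<integral>v. (\<Prod>i\<in>A. K i (x i) (v i) (v (Suc i))) \<partial>(PiM {1..m+1} (\<lambda>_. piV)))"

definition cond_prob ::
  "'v measure \<Rightarrow> (nat \<Rightarrow> 'x \<Rightarrow> 'v \<Rightarrow> 'v \<Rightarrow> real) \<Rightarrow> nat \<Rightarrow> nat \<Rightarrow> (nat \<Rightarrow> 'x) \<Rightarrow> real"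
  where
  "cond_prob piV K q m x = obs_prob piV K m {q..m} x / obs_prob piV K m {q+1..m} x"

end

theory Submission
  imports Defs
begin

locale hmm_ctx =
  fixes piV :: "'v measure"
    and K :: "nat \<Rightarrow> 'x \<Rightarrow> 'v \<Rightarrow> 'v \<Rightarrow> real"
    and \<nu> :: "nat \<Rightarrow> real"
    and x :: "nat \<Rightarrow> 'x"
  assumes prob: "prob_space piV"
    and K_meas: "\<And>i y. i \<ge> 1 \<Longrightarrow> (\<lambda>(v, w). K i y v w) \<in> borel_measurable (piV \<Otimes>\<^sub>M piV)"
    and nu_pos: "\<And>i. i \<ge> 1 \<Longrightarrow> \<nu> i > 0"
    and H2: "\<And>i y v w. i \<ge> 1 \<Longrightarrow> v \<in> space piV \<Longrightarrow> w \<in> space piV \<Longrightarrow>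
                    \<nu> i \<le> K i y v w \<and> K i y v w \<le> 1"
begin

interpretation P: prob_space piV by (rule prob)

lemma Kc:
  assumes "i \<ge> 1" "f \<in> measurable M piV" "g \<in> measurable M piV"
  shows "(\<lambda>z. K i y (f z) (g z)) \<in> borel_measurable M"
  using measurable_compose[OF measurable_Pair[OF assms(2,3)] K_meas[OF assms(1), of y]] by simp

definition good :: "('v \<Rightarrow> real) \<Rightarrow> bool" where
  "good G \<longleftrightarrow> G \<in> borel_measurable piV \<and> (\<exists>C. \<forall>w\<in>space piV. \<bar>G w\<bar> \<le> C)"

definition T :: "nat \<Rightarrow> ('v \<Rightarrow> real) \<Rightarrow> 'v \<Rightarrow> real" where
  "T k G w = (\<integral>v. G v * K k (x k) v w \<partial>piV)"

primrec iterT :: "('v \<Rightarrow> real) \<Rightarrow> nat \<Rightarrow> nat \<Rightarrow> 'v \<Rightarrow> real" where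
  "iterT G s 0 = G"
| "iterT G s (Suc d) = iterT (T s G) (Suc s) d"

lemma space_ne: "space piV \<noteq> {}"
  using P.not_empty by auto

lemma nu_le1: "i \<ge> 1 \<Longrightarrow> \<nu> i \<le> 1"
  using H2 space_ne by fastforce

lemma K_nonneg: "i \<ge> 1 \<Longrightarrow> v \<in> space piV \<Longrightarrow> w \<in> space piV \<Longrightarrow> 0 \<le> K i y v w"
  using H2[of i v w y] nu_pos[of i] by linarith

lemma int_good: "good G \<Longrightarrow> integrable piV G"
  unfolding good_def by (auto intro!: P.integrable_const_bound AE_I2)

lemma intK:
  assumes "good G" "k \<ge> 1" "w \<in> space piV"
  shows "integrable piV (\<lambda>v. G v * K k (x k) v w)"
proof -
  from assms(1) obtain C where G: "G \<in> borel_measurable piV" "\<forall>w\<in>space piV. \<bar>G w\<bar> \<le> C"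
    unfolding good_def by auto
  have m: "(\<lambda>v. K k (x k) v w) \<in> borel_measurable piV"
    using Kc[OF assms(2), of "\<lambda>v. v" piV "\<lambda>_. w"] assms(3) by simp
  show ?thesis
  proof (rule P.integrable_const_bound[where B=C])
    show "AE v in piV. norm (G v * K k (x k) v w) \<le> C"
    proof (rule AE_I2)
      fix v assume v: "v \<in> space piV"
      have "\<bar>G v * K k (x k) v w\<bar> = \<bar>G v\<bar> * K k (x k) v w"
        using K_nonneg[OF assms(2) v assms(3)] by (simp add: abs_mult)
      also have "\<dots> \<le> \<bar>G v\<bar> * 1"
        using H2[OF assms(2) v assms(3)] by (intro mult_left_mono) auto
      finally show "norm (G v * K k (x k) v w) \<le> C" using G(2)[rule_format, OF v] by simp
    qed
    show "(\<lambda>v. G v * K k (x k) v w) \<in> borel_measurable piV" using G(1) m by simp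
  qed
qed

lemma T_good:
  assumes "good G" "k \<ge> 1"
  shows "good (T k G)"
proof -
  from assms(1) obtain C where G: "G \<in> borel_measurable piV" "\<forall>w\<in>space piV. \<bar>G w\<bar> \<le> C"
    unfolding good_def by auto
  have "(\<lambda>(w, v). G v * K k (x k) v w) \<in> borel_measurable (piV \<Otimes>\<^sub>M piV)"
  proof -
    have "(\<lambda>p. K k (x k) (snd p) (fst p)) \<in> borel_measurable (piV \<Otimes>\<^sub>M piV)"
      by (rule Kc[OF assms(2)]) auto
    moreover have "(\<lambda>p. G (snd p)) \<in> borel_measurable (piV \<Otimes>\<^sub>M piV)"
      using G(1) by measurable
    ultimately show ?thesis by (simp add: case_prod_beta')
  qed
  then have "T k G \<in> borel_measurable piV"
    unfolding T_def[abs_def] by (rule P.borel_measurable_lebesgue_integral)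
  moreover have "\<forall>w\<in>space piV. \<bar>T k G w\<bar> \<le> C"
  proof
    fix w assume w: "w \<in> space piV"
    have "\<bar>T k G w\<bar> \<le> (\<integral>v. \<bar>G v * K k (x k) v w\<bar> \<partial>piV)"
      unfolding T_def by (rule integral_abs_bound)
    also have "\<dots> \<le> (\<integral>v. C \<partial>piV)"
    proof (rule integral_mono)
      show "integrable piV (\<lambda>v. \<bar>G v * K k (x k) v w\<bar>)"
        using intK[OF assms w] by auto
      show "integrable piV (\<lambda>v. C)" by simp
      fix v assume v: "v \<in> space piV"
      have "\<bar>G v * K k (x k) v w\<bar> = \<bar>G v\<bar> * K k (x k) v w"
        using K_nonneg[OF assms(2) v w] by (simp add: abs_mult)
      also have "\<dots> \<le> \<bar>G v\<bar> * 1"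
        using H2[OF assms(2) v w] by (intro mult_left_mono) auto
      finally show "\<bar>G v * K k (x k) v w\<bar> \<le> C" using G(2)[rule_format, OF v] by linarith
    qed
    also have "\<dots> = C" by (simp add: P.prob_space)
    finally show "\<bar>T k G w\<bar> \<le> C" .
  qed
  ultimately show ?thesis unfolding good_def by auto
qed

lemma T_bounds:
  assumes "good H" "\<forall>w\<in>space piV. 0 \<le> H w" "k \<ge> 1" "w \<in> space piV"
  shows "\<nu> k * integral\<^sup>L piV H \<le> T k H w \<and> T k H w \<le> integral\<^sup>L piV H"
proof
  have iH: "integrable piV H" by (rule int_good[OF assms(1)])
  have iK: "integrable piV (\<lambda>v. H v * K k (x k) v w)" by (rule intK[OF assms(1,3,4)])
  have "\<nu> k * integral\<^sup>L piV H = (\<integral>v. \<nu> k * H v \<partial>piV)" by simp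
  also have "\<dots> \<le> T k H w" unfolding T_def
  proof (rule integral_mono)
    show "integrable piV (\<lambda>v. \<nu> k * H v)" using iH by simp
    show "integrable piV (\<lambda>v. H v * K k (x k) v w)" by (rule iK)
    fix v assume v: "v \<in> space piV"
    show "\<nu> k * H v \<le> H v * K k (x k) v w"
      using H2[OF assms(3) v assms(4)] assms(2) v by (simp add: mult.commute mult_left_mono)
  qed
  finally show "\<nu> k * integral\<^sup>L piV H \<le> T k H w" .
  show "T k H w \<le> integral\<^sup>L piV H" unfolding T_def
  proof (rule integral_mono)
    show "integrable piV H" by (rule iH)
    show "integrable piV (\<lambda>v. H v * K k (x k) v w)" by (rule iK)
    fix v assume v: "v \<in> space piV"
    show "H v * K k (x k) v w \<le> H v"
      using H2[OF assms(3) v assms(4)] assms(2) v mult_left_mono[of "K k (x k) v w" 1 "H v"] by simp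
  qed
qed

lemma T_mono:
  assumes "good E" "good G" "\<forall>w\<in>space piV. E w \<le> G w" "k \<ge> 1" "w \<in> space piV"
  shows "T k E w \<le> T k G w"
  unfolding T_def
proof (rule integral_mono)
  show "integrable piV (\<lambda>v. E v * K k (x k) v w)" by (rule intK[OF assms(1,4,5)])
  show "integrable piV (\<lambda>v. G v * K k (x k) v w)" by (rule intK[OF assms(2,4,5)])
  fix v assume v: "v \<in> space piV"
  show "E v * K k (x k) v w \<le> G v * K k (x k) v w"
    using K_nonneg[OF assms(4) v assms(5)] assms(3) v by (simp add: mult_right_mono)
qed

lemma T_scale: "T k (\<lambda>v. c * E v) = (\<lambda>w. c * T k E w)"
  unfolding T_def by (auto simp: mult.assoc)

lemma iterT_good: "good G \<Longrightarrow> s \<ge> 1 \<Longrightarrow> good (iterT G s r)"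
  by (induction r arbitrary: G s) (simp_all add: T_good)

lemma iterT_scale: "iterT (\<lambda>v. c * E v) s r = (\<lambda>w. c * iterT E s r w)"
  by (induction r arbitrary: E s) (auto simp: T_scale)

lemma iterT_mono:
  "good E \<Longrightarrow> good G \<Longrightarrow> \<forall>w\<in>space piV. E w \<le> G w \<Longrightarrow> s \<ge> 1 \<Longrightarrow>
   \<forall>w\<in>space piV. iterT E s r w \<le> iterT G s r w"
proof (induction r arbitrary: E G s)
  case 0 then show ?case by simp
next
  case (Suc r)
  have "\<forall>w\<in>space piV. T s E w \<le> T s G w" using Suc.prems T_mono by blast
  then show ?case using Suc.IH[of "T s E" "T s G" "Suc s"] Suc.prems T_good by simp
qed

lemma iterT_add: "iterT G s (d1 + d2) = iterT (iterT G s d1) (s + d1) d2"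
  by (induction d1 arbitrary: G s) auto

lemma iterT_snoc: "iterT G s (Suc d) = T (s + d) (iterT G s d)"
  using iterT_add[of G s d 1] by simp

lemma iterT_pos:
  "good G \<Longrightarrow> \<forall>w\<in>space piV. 0 \<le> G w \<Longrightarrow> integral\<^sup>L piV G > 0 \<Longrightarrow> s \<ge> 1 \<Longrightarrow>
   (\<forall>w\<in>space piV. 0 \<le> iterT G s r w) \<and> integral\<^sup>L piV (iterT G s r) > 0"
proof (induction r arbitrary: G s)
  case 0 then show ?case by simp
next
  case (Suc r)
  have lb: "\<forall>w\<in>space piV. \<nu> s * integral\<^sup>L piV G \<le> T s G w"
    using T_bounds Suc.prems by blast
  have p: "\<nu> s * integral\<^sup>L piV G > 0" using nu_pos[OF Suc.prems(4)] Suc.prems(3) by simp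
  have nn: "\<forall>w\<in>space piV. 0 \<le> T s G w" using lb p by (meson less_le_trans less_imp_le)
  have "integral\<^sup>L piV (\<lambda>_. \<nu> s * integral\<^sup>L piV G) \<le> integral\<^sup>L piV (T s G)"
    by (rule integral_mono) (use lb int_good[OF T_good[OF Suc.prems(1,4)]] in auto)
  then have "integral\<^sup>L piV (T s G) > 0" using p by (simp add: P.prob_space)
  then show ?case using Suc.IH[of "T s G" "Suc s"] nn T_good[OF Suc.prems(1,4)] by simp
qed

interpretation PS: product_sigma_finite "\<lambda>_::nat. piV"
  by standard

lemma comp_space:
  "v \<in> space (PiM I (\<lambda>_::nat. piV)) \<Longrightarrow> i \<in> I \<Longrightarrow> v i \<in> space piV"
  by (auto simp: space_PiM)

lemma intPi:
  assumes "good G" "1 \<le> a" "a \<le> s" "s \<le> b"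
  shows "integrable (PiM {a..b} (\<lambda>_. piV))
           (\<lambda>v. G (v s) * (\<Prod>i\<in>{s..<b}. K i (x i) (v i) (v (Suc i))))"
proof -
  interpret Q: prob_space "PiM {a..b} (\<lambda>_::nat. piV)"
    by (rule prob_space_PiM) (rule prob)
  from assms(1) obtain C where G: "G \<in> borel_measurable piV" "\<forall>w\<in>space piV. \<bar>G w\<bar> \<le> C"
    unfolding good_def by auto
  show ?thesis
  proof (rule Q.integrable_const_bound[where B=C])
    show "AE v in PiM {a..b} (\<lambda>_. piV).
            norm (G (v s) * (\<Prod>i\<in>{s..<b}. K i (x i) (v i) (v (Suc i)))) \<le> C"
    proof (rule AE_I2)
      fix v assume v: "v \<in> space (PiM {a..b} (\<lambda>_::nat. piV))"
      have "\<forall>i\<in>{s..<b}. 0 \<le> K i (x i) (v i) (v (Suc i)) \<and> K i (x i) (v i) (v (Suc i)) \<le> 1"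
      proof
        fix i assume i: "i \<in> {s..<b}"
        have "v i \<in> space piV" "v (Suc i) \<in> space piV"
          using comp_space[OF v] i assms by auto
        then show "0 \<le> K i (x i) (v i) (v (Suc i)) \<and> K i (x i) (v i) (v (Suc i)) \<le> 1"
          using H2[of i "v i" "v (Suc i)"] K_nonneg[of i "v i" "v (Suc i)"] i assms by auto
      qed
      then have p: "0 \<le> (\<Prod>i\<in>{s..<b}. K i (x i) (v i) (v (Suc i)))"
                "(\<Prod>i\<in>{s..<b}. K i (x i) (v i) (v (Suc i))) \<le> 1"
        by (auto intro: prod_nonneg prod_le_1)
      have "\<bar>G (v s)\<bar> \<le> C" using G(2) comp_space[OF v, of s] assms by auto
      then have "\<bar>G (v s)\<bar> * (\<Prod>i\<in>{s..<b}. K i (x i) (v i) (v (Suc i))) \<le> C"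
        using p mult_left_mono[OF p(2), of "\<bar>G (v s)\<bar>"] by simp
      then show "norm (G (v s) * (\<Prod>i\<in>{s..<b}. K i (x i) (v i) (v (Suc i)))) \<le> C"
        using p by (simp add: abs_mult)
    qed
    have m1: "(\<lambda>v. G (v s)) \<in> borel_measurable (PiM {a..b} (\<lambda>_::nat. piV))"
      using measurable_compose[OF measurable_component_singleton[of s "{a..b}" "\<lambda>_. piV"] G(1)] assms by auto
    have m2: "(\<lambda>v. \<Prod>i\<in>{s..<b}. K i (x i) (v i) (v (Suc i))) \<in> borel_measurable (PiM {a..b} (\<lambda>_::nat. piV))"
    proof (rule borel_measurable_prod)
      fix i assume i: "i \<in> {s..<b}"
      show "(\<lambda>v. K i (x i) (v i) (v (Suc i))) \<in> borel_measurable (PiM {a..b} (\<lambda>_::nat. piV))"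
        by (rule Kc) (use i assms in \<open>auto intro!: measurable_component_singleton\<close>)
    qed
    show "(\<lambda>v. G (v s) * (\<Prod>i\<in>{s..<b}. K i (x i) (v i) (v (Suc i)))) \<in> borel_measurable (PiM {a..b} (\<lambda>_. piV))"
      using m1 m2 by simp
  qed
qed

lemma rep:
  assumes "good G" "1 \<le> a" "a \<le> s" "s \<le> b"
  shows "(\<integral>v. G (v s) * (\<Prod>i\<in>{s..<b}. K i (x i) (v i) (v (Suc i))) \<partial>PiM {a..b} (\<lambda>_. piV))
         = integral\<^sup>L piV (iterT G s (b - s))"
  using assms
proof (induction "b - a" arbitrary: a s G)
  case 0
  then have ab: "a = b" "s = b" by auto
  have m: "G \<in> borel_measurable piV" using 0 unfolding good_def by auto
  show ?case using ab PS.product_integral_singleton[OF m, of b] by simp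
next
  case (Suc d)
  then have ab: "a < b" by auto
  have ins: "{a..b} = insert a {Suc a..b}" using ab by auto
  have fin: "finite {Suc a..b}" "a \<notin> {Suc a..b}" by auto
  let ?f = "\<lambda>v. G (v s) * (\<Prod>i\<in>{s..<b}. K i (x i) (v i) (v (Suc i)))"
  have "integral\<^sup>L (PiM {a..b} (\<lambda>_. piV)) ?f
      = (\<integral>v. (\<integral>y. ?f (v(a:=y)) \<partial>piV) \<partial>PiM {Suc a..b} (\<lambda>_. piV))"
    unfolding ins by (rule PS.product_integral_insert[OF fin]) (use intPi[OF Suc.prems] ins in simp)
  also have "\<dots> = integral\<^sup>L piV (iterT G s (b - s))"
  proof (cases "a < s")
    case True
    have "(\<integral>y. ?f (v(a:=y)) \<partial>piV) = ?f v" for v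
    proof -
      have "?f (v(a:=y)) = ?f v" for y
        using True by (auto intro!: prod.cong)
      then show ?thesis by (simp add: P.prob_space)
    qed
    then have "(\<integral>v. (\<integral>y. ?f (v(a:=y)) \<partial>piV) \<partial>PiM {Suc a..b} (\<lambda>_. piV))
             = integral\<^sup>L (PiM {Suc a..b} (\<lambda>_. piV)) ?f" by simp
    also have "\<dots> = integral\<^sup>L piV (iterT G s (b - s))"
      using Suc.hyps(1)[of "Suc a" G s] Suc.hyps(2) Suc.prems True by simp
    finally show ?thesis .
  next
    case False
    then have as: "a = s" using Suc.prems by simp
    have "(\<integral>y. ?f (v(a:=y)) \<partial>piV)
        = T s G (v (Suc s)) * (\<Prod>i\<in>{Suc s..<b}. K i (x i) (v i) (v (Suc i)))" for v
    proof -
      have sb: "{s..<b} = insert s {Suc s..<b}" using ab as by auto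
      have "?f (v(a:=y)) = (G y * K s (x s) y (v (Suc s))) * (\<Prod>i\<in>{Suc s..<b}. K i (x i) (v i) (v (Suc i)))" for y
        unfolding sb using as by (auto intro!: prod.cong)
      then show ?thesis unfolding T_def by simp
    qed
    then have "(\<integral>v. (\<integral>y. ?f (v(a:=y)) \<partial>piV) \<partial>PiM {Suc a..b} (\<lambda>_. piV))
        = (\<integral>v. T s G (v (Suc s)) * (\<Prod>i\<in>{Suc s..<b}. K i (x i) (v i) (v (Suc i))) \<partial>PiM {Suc s..b} (\<lambda>_. piV))"
      using as by simp
    also have "\<dots> = integral\<^sup>L piV (iterT (T s G) (Suc s) (b - Suc s))"
      using Suc.hyps(1)[of "Suc s" "T s G" "Suc s"] Suc.hyps(2) Suc.prems as ab T_good by simp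
    also have "\<dots> = integral\<^sup>L piV (iterT G s (b - s))"
    proof -
      have "b - s = Suc (b - Suc s)" using ab as by simp
      then show ?thesis by simp
    qed
    finally show ?thesis .
  qed
  finally show ?case .
qed

lemma good_const: "good (\<lambda>_. c)"
  unfolding good_def by auto

lemma good_lin: "good F \<Longrightarrow> good G \<Longrightarrow> good (\<lambda>v. F v - c * G v)"
proof -
  assume F: "good F" and G: "good G"
  from F obtain C1 where C1: "F \<in> borel_measurable piV" "\<forall>w\<in>space piV. \<bar>F w\<bar> \<le> C1"
    unfolding good_def by auto
  from G obtain C2 where C2: "G \<in> borel_measurable piV" "\<forall>w\<in>space piV. \<bar>G w\<bar> \<le> C2"
    unfolding good_def by auto
  have "\<forall>w\<in>space piV. \<bar>F w - c * G w\<bar> \<le> C1 + \<bar>c\<bar> * C2"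
  proof
    fix w assume w: "w \<in> space piV"
    have "\<bar>F w - c * G w\<bar> \<le> \<bar>F w\<bar> + \<bar>c\<bar> * \<bar>G w\<bar>"
      using abs_triangle_ineq4[of "F w" "c * G w"] by (simp add: abs_mult)
    also have "\<dots> \<le> C1 + \<bar>c\<bar> * C2"
      using C1(2) C2(2) w by (intro add_mono mult_left_mono) auto
    finally show "\<bar>F w - c * G w\<bar> \<le> C1 + \<bar>c\<bar> * C2" .
  qed
  then show ?thesis using C1(1) C2(1) unfolding good_def by auto
qed

lemma T_diff:
  assumes "good F" "good G" "k \<ge> 1" "w \<in> space piV"
  shows "T k (\<lambda>v. F v - c * G v) w = T k F w - c * T k G w"
proof -
  have "T k (\<lambda>v. F v - c * G v) w = (\<integral>v. F v * K k (x k) v w - c * (G v * K k (x k) v w) \<partial>piV)"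
    unfolding T_def by (simp add: algebra_simps)
  also have "\<dots> = T k F w - c * T k G w"
    unfolding T_def using intK[OF assms(1,3,4)] intK[OF assms(2,3,4)] by simp
  finally show ?thesis .
qed

lemma obs_rep:
  assumes "1 \<le> s" "s \<le> m + 1"
  shows "obs_prob piV K m {s..m} x = integral\<^sup>L piV (iterT (\<lambda>_. 1) s (m + 1 - s))"
proof -
  have "obs_prob piV K m {s..m} x =
     (\<integral>v. (\<lambda>_. 1::real) (v s) * (\<Prod>i\<in>{s..<m+1}. K i (x i) (v i) (v (Suc i))) \<partial>PiM {1..m+1} (\<lambda>_. piV))"
    unfolding obs_prob_def by (simp add: atLeastLessThanSuc_atLeastAtMost)
  also have "\<dots> = integral\<^sup>L piV (iterT (\<lambda>_. 1) s (m + 1 - s))"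
    by (rule rep) (use assms good_const in auto)
  finally show ?thesis .
qed

lemma inv_step:
  assumes gh: "good h" and ge: "good e" and e0: "\<forall>w\<in>space piV. 0 \<le> e w"
    and Epos: "integral\<^sup>L piV e > 0" and k: "k \<ge> 1"
    and ab: "\<forall>w\<in>space piV. a * e w \<le> h w \<and> h w \<le> b * e w"
  shows "\<exists>a' b'. a \<le> a' \<and> a' \<le> b' \<and> b' \<le> b \<and> b' - a' = (1 - \<nu> k) * (b - a) \<and>
           (\<forall>w\<in>space piV. a' * T k e w \<le> T k h w \<and> T k h w \<le> b' * T k e w)"
proof -
  define E where "E = integral\<^sup>L piV e"
  define Hh where "Hh = integral\<^sup>L piV h"
  define L where "L = Hh / E"
  have EP: "E > 0" using Epos E_def by simp
  have LE: "L * E = Hh" using EP L_def by simp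
  have aE: "a * E \<le> Hh"
  proof -
    have "integral\<^sup>L piV (\<lambda>v. a * e v) \<le> integral\<^sup>L piV h"
      by (rule integral_mono) (use int_good[OF ge] int_good[OF gh] ab in auto)
    then show ?thesis by (simp add: E_def Hh_def)
  qed
  have bE: "Hh \<le> b * E"
  proof -
    have "integral\<^sup>L piV h \<le> integral\<^sup>L piV (\<lambda>v. b * e v)"
      by (rule integral_mono) (use int_good[OF ge] int_good[OF gh] ab in auto)
    then show ?thesis by (simp add: E_def Hh_def)
  qed
  have aL: "a \<le> L" using aE EP L_def by (simp add: pos_le_divide_eq)
  have Lb: "L \<le> b" using bE EP L_def by (simp add: pos_divide_le_eq)
  have nu: "0 < \<nu> k" "\<nu> k \<le> 1" using nu_pos[OF k] nu_le1[OF k] by auto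
  define a' where "a' = \<nu> k * L + (1 - \<nu> k) * a"
  define b' where "b' = \<nu> k * L + (1 - \<nu> k) * b"
  have "a \<le> a'"
  proof -
    have "a' - a = \<nu> k * (L - a)" unfolding a'_def by (simp add: algebra_simps)
    also have "\<dots> \<ge> 0" using nu aL by simp
    finally show ?thesis by simp
  qed
  moreover have "b' \<le> b"
  proof -
    have "b - b' = \<nu> k * (b - L)" unfolding b'_def by (simp add: algebra_simps)
    also have "\<dots> \<ge> 0" using nu Lb by simp
    finally show ?thesis by simp
  qed
  moreover have "b' - a' = (1 - \<nu> k) * (b - a)" unfolding a'_def b'_def by (simp add: algebra_simps)
  moreover have "a' \<le> b'" using aL Lb nu unfolding a'_def b'_def
    by (simp add: mult_left_mono)
  moreover have "\<forall>w\<in>space piV. a' * T k e w \<le> T k h w \<and> T k h w \<le> b' * T k e w"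
  proof
    fix w assume w: "w \<in> space piV"
    have TeE: "T k e w \<le> E" using T_bounds[OF ge e0 k w] E_def by simp
    have gD1: "good (\<lambda>v. h v - a * e v)" by (rule good_lin[OF gh ge])
    have D1nn: "\<forall>v\<in>space piV. 0 \<le> h v - a * e v" using ab by auto
    have "\<nu> k * integral\<^sup>L piV (\<lambda>v. h v - a * e v) \<le> T k (\<lambda>v. h v - a * e v) w"
      using T_bounds[OF gD1 D1nn k w] by simp
    moreover have "integral\<^sup>L piV (\<lambda>v. h v - a * e v) = Hh - a * E"
      using int_good[OF gh] int_good[OF ge] by (simp add: Hh_def E_def)
    moreover have "T k (\<lambda>v. h v - a * e v) w = T k h w - a * T k e w"
      by (rule T_diff[OF gh ge k w])
    ultimately have low: "\<nu> k * (Hh - a * E) \<le> T k h w - a * T k e w" by simp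
    have "\<nu> k * (L - a) * T k e w \<le> \<nu> k * (L - a) * E"
      using TeE nu aL by (intro mult_left_mono) auto
    moreover have "a' * T k e w = a * T k e w + \<nu> k * (L - a) * T k e w"
      unfolding a'_def by (simp add: algebra_simps)
    moreover have "\<nu> k * (L - a) * E = \<nu> k * (Hh - a * E)"
      unfolding LE[symmetric] by (simp add: algebra_simps)
    ultimately have "a' * T k e w = a * T k e w + \<nu> k * (L - a) * T k e w
          \<and> \<nu> k * (L - a) * T k e w \<le> \<nu> k * (Hh - a * E)" by simp
    then have lo: "a' * T k e w \<le> T k h w" using low by linarith
    have gbe: "good (\<lambda>v. b * e v)" using good_lin[OF good_const ge, of 0 "-b"] by simp
    have gD2: "good (\<lambda>v. b * e v - 1 * h v)" by (rule good_lin[OF gbe gh])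
    have D2nn: "\<forall>v\<in>space piV. 0 \<le> b * e v - 1 * h v" using ab by auto
    have "\<nu> k * integral\<^sup>L piV (\<lambda>v. b * e v - 1 * h v) \<le> T k (\<lambda>v. b * e v - 1 * h v) w"
      using T_bounds[OF gD2 D2nn k w] by simp
    moreover have "integral\<^sup>L piV (\<lambda>v. b * e v - 1 * h v) = b * E - Hh"
      using int_good[OF gh] int_good[OF ge] by (simp add: Hh_def E_def)
    moreover have "T k (\<lambda>v. b * e v - 1 * h v) w = b * T k e w - T k h w"
    proof -
      from gbe have "T k (\<lambda>v. b * e v - 1 * h v) w = T k (\<lambda>v. b * e v) w - 1 * T k h w"
        by (rule T_diff[OF _ gh k w])
      then show ?thesis by (simp add: T_scale)
    qed
    ultimately have up: "\<nu> k * (b * E - Hh) \<le> b * T k e w - T k h w" by simp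
    have "\<nu> k * (b - L) * T k e w \<le> \<nu> k * (b - L) * E"
      using TeE nu Lb by (intro mult_left_mono) auto
    moreover have "b' * T k e w = b * T k e w - \<nu> k * (b - L) * T k e w"
      unfolding b'_def by (simp add: algebra_simps)
    moreover have "\<nu> k * (b - L) * E = \<nu> k * (b * E - Hh)"
      unfolding LE[symmetric] by (simp add: algebra_simps)
    ultimately have "b' * T k e w = b * T k e w - \<nu> k * (b - L) * T k e w
          \<and> \<nu> k * (b - L) * T k e w \<le> \<nu> k * (b * E - Hh)" by simp
    then have hi: "T k h w \<le> b' * T k e w" using up by linarith
    show "a' * T k e w \<le> T k h w \<and> T k h w \<le> b' * T k e w" using lo hi by simp
  qed
  ultimately show ?thesis by blast
qed

lemma inv:
  assumes q: "q \<ge> 1"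
  shows "\<exists>a b. \<nu> q \<le> a \<and> a \<le> b \<and> b \<le> 1 \<and> b - a \<le> (\<Prod>k\<in>{Suc q..<Suc q + d}. 1 - \<nu> k) \<and>
     (\<forall>w\<in>space piV. a * iterT (\<lambda>_. 1) (Suc q) d w \<le> iterT (\<lambda>_. 1) q (Suc d) w \<and>
                     iterT (\<lambda>_. 1) q (Suc d) w \<le> b * iterT (\<lambda>_. 1) (Suc q) d w)"
proof (induction d)
  case 0
  have "\<forall>w\<in>space piV. \<nu> q \<le> T q (\<lambda>_. 1) w \<and> T q (\<lambda>_. 1) w \<le> 1"
  proof
    fix w assume w: "w \<in> space piV"
    show "\<nu> q \<le> T q (\<lambda>_. 1) w \<and> T q (\<lambda>_. 1) w \<le> 1"
      using T_bounds[OF good_const[of 1] _ q w] by (simp add: P.prob_space)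
  qed
  moreover have "1 - \<nu> q \<le> 1" using nu_pos[OF q] by simp
  moreover have "\<nu> q \<le> 1" by (rule nu_le1[OF q])
  ultimately show ?case by (intro exI[of _ "\<nu> q"] exI[of _ 1]) auto
next
  case (Suc d)
  then obtain a b where ab: "\<nu> q \<le> a" "a \<le> b" "b \<le> 1" "b - a \<le> (\<Prod>k\<in>{Suc q..<Suc q + d}. 1 - \<nu> k)"
     "\<forall>w\<in>space piV. a * iterT (\<lambda>_. 1) (Suc q) d w \<le> iterT (\<lambda>_. 1) q (Suc d) w \<and>
                     iterT (\<lambda>_. 1) q (Suc d) w \<le> b * iterT (\<lambda>_. 1) (Suc q) d w" by blast
  define e where "e = iterT (\<lambda>_. 1::real) (Suc q) d"
  define h where "h = iterT (\<lambda>_. 1::real) q (Suc d)"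
  define k where "k = Suc q + d"
  have k: "k \<ge> 1" unfolding k_def by simp
  have ge: "good e" unfolding e_def by (rule iterT_good[OF good_const]) simp
  have gh: "good h" unfolding h_def by (rule iterT_good[OF good_const q])
  have ep: "(\<forall>w\<in>space piV. 0 \<le> e w) \<and> integral\<^sup>L piV e > 0"
    unfolding e_def by (rule iterT_pos[OF good_const]) (auto simp: P.prob_space)
  obtain a' b' where st: "a \<le> a'" "a' \<le> b'" "b' \<le> b" "b' - a' = (1 - \<nu> k) * (b - a)"
     "\<forall>w\<in>space piV. a' * T k e w \<le> T k h w \<and> T k h w \<le> b' * T k e w"
    using inv_step[OF gh ge _ _ k, of a b] ep ab(5) unfolding e_def h_def by blast
  have eq1: "iterT (\<lambda>_. 1) q (Suc (Suc d)) = T k h"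
    unfolding h_def k_def using iterT_snoc[of "\<lambda>_. 1" q "Suc d"] by simp
  have eq2: "iterT (\<lambda>_. 1) (Suc q) (Suc d) = T k e"
    unfolding e_def k_def using iterT_snoc[of "\<lambda>_. 1" "Suc q" d] by simp
  have pr: "(\<Prod>k\<in>{Suc q..<Suc q + Suc d}. 1 - \<nu> k) = (\<Prod>k\<in>{Suc q..<Suc q + d}. 1 - \<nu> k) * (1 - \<nu> k)"
    unfolding k_def by (simp add: prod.atLeastLessThan_Suc)
  have "b' - a' \<le> (\<Prod>k\<in>{Suc q..<Suc q + Suc d}. 1 - \<nu> k)"
  proof -
    have "(1 - \<nu> k) * (b - a) \<le> (1 - \<nu> k) * (\<Prod>k\<in>{Suc q..<Suc q + d}. 1 - \<nu> k)"
      by (rule mult_left_mono[OF ab(4)]) (use nu_le1[OF k] in simp)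
    then show ?thesis unfolding st(4) pr by (simp only: mult.commute)
  qed
  then show ?case unfolding eq1 eq2 using st ab by (intro exI[of _ a'] exI[of _ b']) auto
qed

lemma cond_bounds:
  assumes q: "q \<ge> 1" and qn: "Suc q \<le> n"
  shows "\<exists>a b. \<nu> q \<le> a \<and> a \<le> b \<and> b \<le> 1 \<and> b - a \<le> (\<Prod>k\<in>{Suc q..<n}. 1 - \<nu> k) \<and>
     (\<forall>m \<ge> n. a \<le> cond_prob piV K q m x \<and> cond_prob piV K q m x \<le> b)"
proof -
  define d where "d = n - Suc q"
  have nd: "Suc q + d = n" using qn d_def by simp
  obtain a b where ab: "\<nu> q \<le> a" "a \<le> b" "b \<le> 1" "b - a \<le> (\<Prod>k\<in>{Suc q..<n}. 1 - \<nu> k)"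
     "\<forall>w\<in>space piV. a * iterT (\<lambda>_. 1) (Suc q) d w \<le> iterT (\<lambda>_. 1) q (Suc d) w \<and>
                     iterT (\<lambda>_. 1) q (Suc d) w \<le> b * iterT (\<lambda>_. 1) (Suc q) d w"
    using inv[OF q, of d] nd by auto
  define e where "e = iterT (\<lambda>_. 1::real) (Suc q) d"
  define h where "h = iterT (\<lambda>_. 1::real) q (Suc d)"
  have ge: "good e" unfolding e_def by (rule iterT_good[OF good_const]) simp
  have gh: "good h" unfolding h_def by (rule iterT_good[OF good_const q])
  have ep: "(\<forall>w\<in>space piV. 0 \<le> e w) \<and> integral\<^sup>L piV e > 0"
    unfolding e_def by (rule iterT_pos[OF good_const]) (auto simp: P.prob_space)
  have n1: "n \<ge> 1" using qn by simp
  have "a \<le> cond_prob piV K q m x \<and> cond_prob piV K q m x \<le> b" if m: "m \<ge> n" for m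
  proof -
    define r where "r = m + 1 - n"
    have num: "obs_prob piV K m {q..m} x = integral\<^sup>L piV (iterT h n r)"
    proof -
      have e1: "m + 1 - q = Suc d + r" using m nd r_def by simp
      have e2: "q + Suc d = n" using nd by simp
      have "obs_prob piV K m {q..m} x = integral\<^sup>L piV (iterT (\<lambda>_. 1) q (m + 1 - q))"
        by (rule obs_rep) (use q m qn in auto)
      also have "\<dots> = integral\<^sup>L piV (iterT h n r)"
        by (simp only: e1 iterT_add h_def e2)
      finally show ?thesis .
    qed
    have den: "obs_prob piV K m {q+1..m} x = integral\<^sup>L piV (iterT e n r)"
    proof -
      have e1: "m + 1 - Suc q = d + r" using m nd r_def by simp
      have "obs_prob piV K m {Suc q..m} x = integral\<^sup>L piV (iterT (\<lambda>_. 1) (Suc q) (m + 1 - Suc q))"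
        by (rule obs_rep) (use q m qn in auto)
      also have "\<dots> = integral\<^sup>L piV (iterT e n r)"
        by (simp only: e1 iterT_add e_def nd)
      finally show ?thesis by simp
    qed
    have Dp: "integral\<^sup>L piV (iterT e n r) > 0"
      using iterT_pos[OF ge _ _ n1, of r] ep by simp
    have ga: "good (\<lambda>v. a * e v)" using good_lin[OF good_const ge, of 0 "-a"] by simp
    have gb: "good (\<lambda>v. b * e v)" using good_lin[OF good_const ge, of 0 "-b"] by simp
    have lo: "\<forall>w\<in>space piV. a * iterT e n r w \<le> iterT h n r w"
      using iterT_mono[OF ga gh _ n1, of r] ab(5) unfolding iterT_scale e_def h_def by simp
    have hi: "\<forall>w\<in>space piV. iterT h n r w \<le> b * iterT e n r w"
      using iterT_mono[OF gh gb _ n1, of r] ab(5) unfolding iterT_scale e_def h_def by simp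
    have ie: "integrable piV (iterT e n r)" by (rule int_good[OF iterT_good[OF ge n1]])
    have ih: "integrable piV (iterT h n r)" by (rule int_good[OF iterT_good[OF gh n1]])
    have "integral\<^sup>L piV (\<lambda>w. a * iterT e n r w) \<le> integral\<^sup>L piV (iterT h n r)"
      by (rule integral_mono) (use ie ih lo in auto)
    then have l: "a * integral\<^sup>L piV (iterT e n r) \<le> integral\<^sup>L piV (iterT h n r)" by simp
    have "integral\<^sup>L piV (iterT h n r) \<le> integral\<^sup>L piV (\<lambda>w. b * iterT e n r w)"
      by (rule integral_mono) (use ie ih hi in auto)
    then have u: "integral\<^sup>L piV (iterT h n r) \<le> b * integral\<^sup>L piV (iterT e n r)" by simp
    show ?thesis unfolding cond_prob_def num den
      using l u Dp by (simp add: pos_le_divide_eq pos_divide_le_eq)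
  qed
  then show ?thesis using ab by blast
qed

end


lemma logdiff:
  fixes m u v :: real
  assumes "0 < m" "m \<le> u" "m \<le> v"
  shows "\<bar>ln u - ln v\<bar> \<le> \<bar>u - v\<bar> / m"
proof -
  have key: "ln b - ln a \<le> (b - a) / m" if ab: "m \<le> a" "a \<le> b" for a b :: real
  proof -
    have a0: "0 < a" using ab assms by simp
    have "ln b - ln a = ln (b / a)" using a0 ab by (simp add: ln_div)
    also have "\<dots> \<le> b / a - 1" by (rule ln_le_minus_one) (use a0 ab in simp)
    also have "\<dots> = (b - a) / a" using a0 by (simp add: field_simps)
    also have "\<dots> \<le> (b - a) / m" using ab assms by (intro divide_left_mono) auto
    finally show ?thesis .
  qed
  show ?thesis
  proof (cases "u \<le> v")
    case True
    have "ln u \<le> ln v" using True assms by simp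
    then show ?thesis using key[OF assms(2) True] True by simp
  next
    case False
    have "ln v \<le> ln u" using False assms by simp
    then show ?thesis using key[OF assms(3)] False by simp
  qed
qed

theorem lemma6:
  fixes piV :: "'v measure"
    and K :: "nat \<Rightarrow> 'x \<Rightarrow> 'v \<Rightarrow> 'v \<Rightarrow> real"
    and \<nu> :: "nat \<Rightarrow> real"
    and n :: nat
    and x :: "nat \<Rightarrow> 'x"
  assumes prob: "prob_space piV"
    and K_meas: "\<And>i y. i \<ge> 1 \<Longrightarrow> (\<lambda>(v, w). K i y v w) \<in> borel_measurable (piV \<Otimes>\<^sub>M piV)"
    and K_distr: "\<And>i v w. i \<ge> 1 \<Longrightarrow> v \<in> space piV \<Longrightarrow> w \<in> space piV \<Longrightarrow>
                    ((\<lambda>y. K i y v w) has_sum 1) UNIV"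
    and nu_pos: "\<And>i. i \<ge> 1 \<Longrightarrow> \<nu> i > 0"
    and H2: "\<And>i y v w. i \<ge> 1 \<Longrightarrow> v \<in> space piV \<Longrightarrow> w \<in> space piV \<Longrightarrow>
                    \<nu> i \<le> K i y v w \<and> K i y v w \<le> 1"
  shows "(\<forall>q. 1 \<le> q \<and> q \<le> n - 1 \<longrightarrow>
            \<bar>ln (cond_prob piV K q n x)\<bar> \<le> ln (1 / \<nu> q))
       \<and> (\<forall>l q. 1 \<le> l \<and> 1 \<le> q \<and> q \<le> n - 1 \<longrightarrow>
            \<bar>ln (cond_prob piV K q n x) - ln (cond_prob piV K q (n + l) x)\<bar>
              \<le> (1 / \<nu> q) * (\<Prod>k\<in>{q+1..n-1}. (1 - \<nu> k)))"
proof -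
  interpret H: hmm_ctx piV K \<nu> x
    by (rule hmm_ctx.intro[OF prob K_meas nu_pos H2])
  have part1: "\<bar>ln (cond_prob piV K q n x)\<bar> \<le> ln (1 / \<nu> q)" if q: "1 \<le> q" "q \<le> n - 1" for q
  proof -
    have qn: "Suc q \<le> n" using q by simp
    obtain a b where ab: "\<nu> q \<le> a" "a \<le> b" "b \<le> 1"
        "\<forall>m \<ge> n. a \<le> cond_prob piV K q m x \<and> cond_prob piV K q m x \<le> b"
      using H.cond_bounds[OF q(1) qn] by blast
    define c where "c = cond_prob piV K q n x"
    have c0: "a \<le> c \<and> c \<le> b" using ab(4)[rule_format, of n] unfolding c_def by simp
    have c: "\<nu> q \<le> c" "c \<le> 1" using c0 ab(1,3) by linarith+
    have np: "0 < \<nu> q" using nu_pos q by simp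
    have "ln c \<le> 0" using c np by simp
    moreover have "ln (\<nu> q) \<le> ln c" using c np by simp
    moreover have "ln (1 / \<nu> q) = - ln (\<nu> q)" using np by (simp add: ln_div)
    ultimately show ?thesis unfolding c_def[symmetric] by simp
  qed
  have part2: "\<bar>ln (cond_prob piV K q n x) - ln (cond_prob piV K q (n + l) x)\<bar>
              \<le> (1 / \<nu> q) * (\<Prod>k\<in>{q+1..n-1}. (1 - \<nu> k))" if q: "1 \<le> q" "q \<le> n - 1" for q l
  proof -
    have qn: "Suc q \<le> n" using q by simp
    obtain a b where ab: "\<nu> q \<le> a" "a \<le> b" "b \<le> 1" "b - a \<le> (\<Prod>k\<in>{Suc q..<n}. 1 - \<nu> k)"
        "\<forall>m \<ge> n. a \<le> cond_prob piV K q m x \<and> cond_prob piV K q m x \<le> b"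
      using H.cond_bounds[OF q(1) qn] by blast
    define c1 where "c1 = cond_prob piV K q n x"
    define c2 where "c2 = cond_prob piV K q (n + l) x"
    have c: "a \<le> c1" "c1 \<le> b" "a \<le> c2" "c2 \<le> b"
      using ab(5)[rule_format, of n] ab(5)[rule_format, of "n + l"] unfolding c1_def c2_def by auto
    have np: "0 < \<nu> q" using nu_pos q by simp
    have iv: "{q+1..n-1} = {Suc q..<n}" using qn by auto
    have "\<bar>ln c1 - ln c2\<bar> \<le> \<bar>c1 - c2\<bar> / \<nu> q"
      by (rule logdiff) (use np c ab in auto)
    also have "\<dots> \<le> (\<Prod>k\<in>{Suc q..<n}. 1 - \<nu> k) / \<nu> q"
      using c ab(4) np by (intro divide_right_mono) auto
    finally show ?thesis unfolding c1_def c2_def iv by simp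
  qed
  show ?thesis using part1 part2 by blast
qed

end
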